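(* Let $Z$ be an $\omega$-saturated $Z$-group, $G$ a definable group, and $f:(\bigcap_{n\ge1}nZ)^r\to G$ a type-definable group morphism. Let $\Sigma$ and $X\subseteq S^r(\emptyset)$ be as defined below. Suppose there exist a finite tuple $t$ from $Z$ and a type $p\in X$ with $p\vdash x\in(\bigcap_nnZ)^r$ such that $f$ is injective on the set of realizations of $p\cup\Sigma_t$. Then $f$ is injective.
   Context: A $Z$-group is a model of the complete theory of $(\mathbb{Z},+,<)$. $\Sigma(x,y)$, with $x\in Z^r$, $y\in Z$, is the partial type over $\emptyset$ with $(a,b)\models\Sigma$ iff for every nonzero $m\in\mathbb{Z}^r$ and every $k\in\mathbb{Z}_{>0}$, $k\max(|b|,1)<|m_1a_1+\dots+m_ra_r|$. For a finite tuple $b=(b_1,\dots,b_l)$, $\Sigma_b(x)=\bigcup_i\Sigma(x,b_i)$. $X\subseteq S^r(\emptyset)$ is the set of complete types $p$ over $\emptyset$ such that for every finite tuple $t$ there is $a\models p\cup\Sigma_t$. $\bigcap_nnZ$ is the (type-definable) subgroup of divisible elements. *)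

theory Defs
  imports Main "HOL-Algebra.Group"
begin

section \<open>First-order formulas in the language {+,<} (de Bruijn variables)\<close>

datatype tm = V nat | Pl tm tm

datatype fm = Eq tm tm | Lt tm tm | Neg fm | Conj fm fm | Ex fm

fun teval :: "('a \<Rightarrow> 'a \<Rightarrow> 'a) \<Rightarrow> (nat \<Rightarrow> 'a) \<Rightarrow> tm \<Rightarrow> 'a" where
  "teval ad e (V i) = e i"
| "teval ad e (Pl s t) = ad (teval ad e s) (teval ad e t)"

fun sat :: "('a \<Rightarrow> 'a \<Rightarrow> 'a) \<Rightarrow> ('a \<Rightarrow> 'a \<Rightarrow> bool) \<Rightarrow> (nat \<Rightarrow> 'a) \<Rightarrow> fm \<Rightarrow> bool" where
  "sat ad lt e (Eq s t) = (teval ad e s = teval ad e t)"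
| "sat ad lt e (Lt s t) = lt (teval ad e s) (teval ad e t)"
| "sat ad lt e (Neg \<phi>) = (\<not> sat ad lt e \<phi>)"
| "sat ad lt e (Conj \<phi> \<psi>) = (sat ad lt e \<phi> \<and> sat ad lt e \<psi>)"
| "sat ad lt e (Ex \<phi>) = (\<exists>x. sat ad lt (case_nat x e) \<phi>)"

fun tclosed :: "nat \<Rightarrow> tm \<Rightarrow> bool" where
  "tclosed n (V i) = (i < n)"
| "tclosed n (Pl s t) = (tclosed n s \<and> tclosed n t)"

fun closedn :: "nat \<Rightarrow> fm \<Rightarrow> bool" where
  "closedn n (Eq s t) = (tclosed n s \<and> tclosed n t)"
| "closedn n (Lt s t) = (tclosed n s \<and> tclosed n t)"
| "closedn n (Neg \<phi>) = closedn n \<phi>"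
| "closedn n (Conj \<phi> \<psi>) = (closedn n \<phi> \<and> closedn n \<psi>)"
| "closedn n (Ex \<phi>) = closedn (Suc n) \<phi>"

definition zsat :: "'z::linordered_ab_group_add list \<Rightarrow> fm \<Rightarrow> bool" where
  "zsat l \<phi> = sat (+) (<) (\<lambda>i. l ! i) \<phi>"

text \<open>'z is a model of the complete theory of (Z,+,<): it satisfies the same sentences.\<close>
definition Zgroup :: "'z::linordered_ab_group_add itself \<Rightarrow> bool" where
  "Zgroup _ = (\<forall>\<phi>. closedn 0 \<phi> \<longrightarrow>
      (sat ((+)::'z\<Rightarrow>'z\<Rightarrow>'z) (<) (\<lambda>_. 0) \<phi> \<longleftrightarrow> sat ((+)::int\<Rightarrow>int\<Rightarrow>int) (<) (\<lambda>_. 0) \<phi>))"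

definition omega_saturated :: "'z::linordered_ab_group_add itself \<Rightarrow> bool" where
  "omega_saturated _ = (\<forall>(ps::'z list) \<Phi>. (\<forall>\<phi>\<in>\<Phi>. closedn (Suc (length ps)) \<phi>) \<longrightarrow>
      (\<forall>F. finite F \<longrightarrow> F \<subseteq> \<Phi> \<longrightarrow> (\<exists>a. \<forall>\<phi>\<in>F. zsat (a # ps) \<phi>)) \<longrightarrow>
      (\<exists>a. \<forall>\<phi>\<in>\<Phi>. zsat (a # ps) \<phi>))"

definition definable :: "nat \<Rightarrow> 'z::linordered_ab_group_add list set \<Rightarrow> bool" where
  "definable k S = (\<exists>\<phi> (ps::'z list). closedn (k + length ps) \<phi> \<and>
      S = {v. length v = k \<and> zsat (v @ ps) \<phi>})"

definition type_definable :: "nat \<Rightarrow> 'z::linordered_ab_group_add list set \<Rightarrow> bool" where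
  "type_definable k S = (\<exists>\<F>. (\<forall>D\<in>\<F>. definable k D) \<and>
      S = {v. length v = k} \<inter> \<Inter>\<F>)"

definition definable_group :: "nat \<Rightarrow> ('z::linordered_ab_group_add list) monoid \<Rightarrow> bool" where
  "definable_group k G = (group G \<and> definable k (carrier G) \<and>
      definable (3 * k) {x @ y @ z | x y z. x \<in> carrier G \<and> y \<in> carrier G \<and> z = x \<otimes>\<^bsub>G\<^esub> y})"

definition zmul :: "int \<Rightarrow> 'z::linordered_ab_group_add \<Rightarrow> 'z" where
  "zmul k x = (if 0 \<le> k then (\<Sum>_<nat k. x) else - (\<Sum>_<nat (-k). x))"

definition zone :: "'z::linordered_ab_group_add" where
  "zone = (THE u. 0 < u \<and> (\<forall>y. 0 < y \<longrightarrow> u \<le> y))"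

definition divisibles :: "'z::linordered_ab_group_add set" where
  "divisibles = {x. \<forall>n::int. n \<ge> 1 \<longrightarrow> (\<exists>y. zmul n y = x)}"

definition divisibles_pow :: "nat \<Rightarrow> 'z::linordered_ab_group_add list set" where
  "divisibles_pow r = {a. length a = r \<and> set a \<subseteq> divisibles}"

definition lincomb :: "int list \<Rightarrow> 'z::linordered_ab_group_add list \<Rightarrow> 'z" where
  "lincomb m a = (\<Sum>i<length a. zmul (m ! i) (a ! i))"

definition zabs :: "'z::linordered_ab_group_add \<Rightarrow> 'z" where
  "zabs x = max x (- x)"

definition Sigma_rel :: "'z::linordered_ab_group_add list \<Rightarrow> 'z \<Rightarrow> bool" where
  "Sigma_rel a b = (\<forall>m k. length m = length a \<longrightarrow> m \<noteq> replicate (length a) 0 \<longrightarrow> k > 0 \<longrightarrow>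
      zmul k (max (zabs b) zone) < zabs (lincomb m a))"

definition Sigma_t :: "'z::linordered_ab_group_add list \<Rightarrow> 'z list \<Rightarrow> bool" where
  "Sigma_t t a = (\<forall>b\<in>set t. Sigma_rel a b)"

definition complete_type :: "'z::linordered_ab_group_add itself \<Rightarrow> nat \<Rightarrow> fm set \<Rightarrow> bool" where
  "complete_type _ r p = ((\<forall>\<phi>\<in>p. closedn r \<phi>) \<and>
      (\<forall>F. finite F \<longrightarrow> F \<subseteq> p \<longrightarrow> (\<exists>a::'z list. length a = r \<and> (\<forall>\<phi>\<in>F. zsat a \<phi>))) \<and>
      (\<forall>\<phi>. closedn r \<phi> \<longrightarrow> \<phi> \<in> p \<or> Neg \<phi> \<in> p))"

definition realizations :: "nat \<Rightarrow> fm set \<Rightarrow> 'z::linordered_ab_group_add list set" where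
  "realizations r p = {a. length a = r \<and> (\<forall>\<phi>\<in>p. zsat a \<phi>)}"

definition Xset :: "'z::linordered_ab_group_add itself \<Rightarrow> nat \<Rightarrow> fm set set" where
  "Xset T r = {p. complete_type T r p \<and>
      (\<forall>t::'z list. \<exists>a. a \<in> realizations r p \<and> Sigma_t t a)}"

end

theory Submission
  imports Defs
begin


lemma zmul_succ: "zmul (k + 1) x = zmul k x + (x::'z::linordered_ab_group_add)"
proof (cases "k \<ge> 0")
  case True
  then have "nat (k+1) = Suc (nat k)" by simp
  then show ?thesis using True by (simp add: zmul_def add.commute)
next
  case False
  then have k1: "k + 1 \<le> 0" by simp
  show ?thesis
  proof (cases "k = -1")
    case True then show ?thesis by (simp add: zmul_def)
  next
    case False
    with k1 have "\<not> 0 \<le> k+1" by simp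
    moreover have "nat (-k) = Suc (nat (-(k+1)))" using k1 \<open>\<not> k\<ge>0\<close> by simp
    ultimately show ?thesis using \<open>\<not> k \<ge> 0\<close> by (simp add: zmul_def algebra_simps)
  qed
qed

lemma zmul_succ': "zmul (1 + k) x = zmul k x + (x::'z::linordered_ab_group_add)"
  using zmul_succ[of k x] by (simp add: add.commute)

lemma zmul_0[simp]: "zmul 0 x = 0" by (simp add: zmul_def)
lemma zmul_1[simp]: "zmul 1 x = x" using zmul_succ[of 0 x] by simp

lemma zmul_pred: "zmul (k - 1) x = zmul k x - (x::'z::linordered_ab_group_add)"
  using zmul_succ[of "k-1" x] by (simp add: algebra_simps)

lemma zmul_add: "zmul (a + b) x = zmul a x + zmul b (x::'z::linordered_ab_group_add)"
proof (induct b rule: int_induct[where k=0])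
  case base then show ?case by simp
next
  case (step1 i)
  have "zmul (a + (i+1)) x = zmul ((a+i)+1) x" by (simp add: algebra_simps)
  also have "\<dots> = zmul a x + zmul i x + x" using step1 by (simp only: zmul_succ)
  also have "\<dots> = zmul a x + zmul (i+1) x" by (simp only: zmul_succ add.assoc)
  finally show ?case .
next
  case (step2 i)
  have "zmul (a + (i-1)) x = zmul ((a+i)-1) x" by (simp add: algebra_simps)
  also have "\<dots> = zmul a x + zmul i x - x" using step2 by (simp only: zmul_pred)
  also have "\<dots> = zmul a x + zmul (i-1) x" by (simp only: zmul_pred add_diff_eq)
  finally show ?case .
qed

lemma zmul_plus: "zmul a (x + y) = zmul a x + zmul a (y::'z::linordered_ab_group_add)"
proof (induct a rule: int_induct[where k=0])
  case base then show ?case by simp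
next
  case (step1 i) then show ?case by (simp only: zmul_succ) (simp add: algebra_simps)
next
  case (step2 i) then show ?case by (simp only: zmul_pred) (simp add: algebra_simps)
qed

lemma zmul_0_right[simp]: "zmul a (0::'z::linordered_ab_group_add) = 0"
  using zmul_plus[of a 0 0] by simp

lemma zmul_neg_arg: "zmul a (- x) = - zmul a (x::'z::linordered_ab_group_add)"
  using zmul_plus[of a x "-x"] by (simp add: eq_neg_iff_add_eq_0 add.commute)

lemma zmul_neg: "zmul (- a) x = - zmul a (x::'z::linordered_ab_group_add)"
  using zmul_add[of a "-a" x] by (simp add: eq_neg_iff_add_eq_0 add.commute)

lemma zmul_minus_arg: "zmul a (x - y) = zmul a x - zmul a (y::'z::linordered_ab_group_add)"
  using zmul_plus[of a x "-y"] zmul_neg_arg[of a y] by simp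

lemma zmul_diff: "zmul (a - b) x = zmul a x - zmul b (x::'z::linordered_ab_group_add)"
  using zmul_add[of a "-b" x] zmul_neg[of b x] by simp

lemma zmul_mult: "zmul (a * b) x = zmul a (zmul b (x::'z::linordered_ab_group_add))"
proof (induct a rule: int_induct[where k=0])
  case base then show ?case by simp
next
  case (step1 i) then show ?case by (simp add: zmul_succ zmul_add distrib_right)
next
  case (step2 i) then show ?case by (simp add: zmul_pred zmul_diff left_diff_distrib)
qed

lemma zmul_nonneg: "0 \<le> a \<Longrightarrow> 0 \<le> x \<Longrightarrow> 0 \<le> zmul a (x::'z::linordered_ab_group_add)"
proof (induct a rule: int_ge_induct[where k=0])
  case base then show ?case by simp
next
  case (step i) then show ?case by (simp add: zmul_succ)
qed

lemma zmul_pos: "0 < a \<Longrightarrow> 0 < x \<Longrightarrow> 0 < zmul a (x::'z::linordered_ab_group_add)"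
proof -
  assume a: "0 < a" and x: "0 < x"
  have "1 \<le> a" using a by simp
  then show ?thesis
  proof (induct a rule: int_ge_induct)
    case base then show ?case using x by simp
  next
    case (step i) then show ?case using add_pos_pos x by (simp add: zmul_succ)
  qed
qed

lemma zmul_mono: "0 \<le> a \<Longrightarrow> x \<le> y \<Longrightarrow> zmul a x \<le> zmul a (y::'z::linordered_ab_group_add)"
  using zmul_nonneg[of a "y - x"] by (simp add: zmul_minus_arg)

lemma zmul_strict_mono: "0 < a \<Longrightarrow> x < y \<Longrightarrow> zmul a x < zmul a (y::'z::linordered_ab_group_add)"
  using zmul_pos[of a "y - x"] by (simp add: zmul_minus_arg)

lemma zmul_mono_coeff: "a \<le> b \<Longrightarrow> 0 \<le> x \<Longrightarrow> zmul a x \<le> zmul b (x::'z::linordered_ab_group_add)"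
  using zmul_nonneg[of "b - a" x] by (simp add: zmul_diff)

lemma zmul_cancel: "a \<noteq> 0 \<Longrightarrow> zmul a x = zmul a y \<Longrightarrow> x = (y::'z::linordered_ab_group_add)"
proof -
  assume a: "a \<noteq> 0" and e: "zmul a x = zmul a y"
  have "zmul \<bar>a\<bar> x = zmul \<bar>a\<bar> y"
    using e by (cases "a \<ge> 0") (auto simp: zmul_neg)
  moreover have "0 < \<bar>a\<bar>" using a by simp
  ultimately show ?thesis
    by (metis linorder_neqE order_less_irrefl zmul_strict_mono)
qed

lemma zmul_zero_iff: "a \<noteq> 0 \<Longrightarrow> zmul a x = 0 \<longleftrightarrow> x = (0::'z::linordered_ab_group_add)"
  using zmul_cancel[of a x 0] by (auto simp: zmul_def)


lemma zabs_nonneg: "0 \<le> zabs (x::'z::linordered_ab_group_add)"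
  by (simp add: zabs_def le_max_iff_disj) (meson linorder_le_cases neg_0_le_iff_le)
lemma zabs_ge: "x \<le> zabs (x::'z::linordered_ab_group_add)" by (simp add: zabs_def)
lemma zabs_ge_neg: "- x \<le> zabs (x::'z::linordered_ab_group_add)" by (simp add: zabs_def)
lemma zabs_neg[simp]: "zabs (- x) = zabs (x::'z::linordered_ab_group_add)" by (simp add: zabs_def max.commute)
lemma zabs_of_nonneg: "0 \<le> x \<Longrightarrow> zabs x = (x::'z::linordered_ab_group_add)"
  by (simp add: zabs_def)
lemma zabs_triangle: "zabs (x + y) \<le> zabs x + zabs (y::'z::linordered_ab_group_add)"
proof -
  have "x + y \<le> zabs x + zabs y" by (intro add_mono zabs_ge)
  moreover have "-(x + y) \<le> zabs x + zabs y" using add_mono[OF zabs_ge_neg[of x] zabs_ge_neg[of y]] by (simp add: add.commute)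
  ultimately show ?thesis by (simp add: zabs_def)
qed
lemma zabs_zero_iff: "zabs x = 0 \<longleftrightarrow> x = (0::'z::linordered_ab_group_add)"
  unfolding zabs_def by (metis max.absorb1 max.absorb2 max.commute neg_0_equal_iff_equal neg_le_0_iff_le linorder_le_cases)
lemma zabs_zmul: "zabs (zmul a x) = zmul \<bar>a\<bar> (zabs (x::'z::linordered_ab_group_add))"
proof -
  have A: "zabs (zmul a x) = zmul a (zabs x)" if "0 \<le> a" for a
  proof (cases "0 \<le> x")
    case True then show ?thesis using that zmul_nonneg zabs_of_nonneg by metis
  next
    case False
    then have "zabs x = - x" by (simp add: zabs_def)
    moreover have "0 \<le> zmul a (-x)" using False that zmul_nonneg[of a "-x"] by simp
    ultimately show ?thesis
      by (metis zabs_neg zabs_of_nonneg zmul_neg_arg)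
  qed
  show ?thesis
  proof (cases "0 \<le> a")
    case True then show ?thesis using A by simp
  next
    case False then show ?thesis using A[of "-a"] by (simp add: zmul_neg)
  qed
qed




definition lc :: "(nat \<Rightarrow> int) \<Rightarrow> (nat \<Rightarrow> 'z::linordered_ab_group_add) \<Rightarrow> nat \<Rightarrow> 'z" where
  "lc m e n = (\<Sum>i<n. zmul (m i) (e i))"

lemma zmul_sum: "zmul a (\<Sum>i<(n::nat). f i) = (\<Sum>i<n. zmul a (f i :: 'z::linordered_ab_group_add))"
  by (induct n) (simp_all add: zmul_plus)

lemma lc_add_coeff: "lc (\<lambda>i. m i + m' i) e n = lc m e n + lc m' e n"
  by (simp add: lc_def zmul_add sum.distrib)
lemma lc_diff_coeff: "lc (\<lambda>i. m i - m' i) e n = lc m e n - lc m' e n"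
  by (simp add: lc_def zmul_diff sum_subtractf)
lemma lc_smul_coeff: "lc (\<lambda>i. a * m i) e n = zmul a (lc m e n)"
  by (simp add: lc_def zmul_mult zmul_sum)
lemma lc_add_env: "lc m (\<lambda>i. e i + f i) n = lc m e n + lc m f n"
  by (simp add: lc_def zmul_plus sum.distrib)
lemma lc_diff_env: "lc m (\<lambda>i. e i - f i) n = lc m e n - lc m f n"
  by (simp add: lc_def zmul_minus_arg sum_subtractf)
lemma lc_neg_env: "lc m (\<lambda>i. - f i) n = - lc m f n"
  by (simp add: lc_def zmul_neg_arg sum_negf)
lemma lc_shift: "lc m (case_nat x e) (Suc n) = zmul (m 0) x + lc (\<lambda>i. m (Suc i)) e n"
  unfolding lc_def by (subst sum.lessThan_Suc_shift) simp
lemma lc_cong: "(\<And>i. i < n \<Longrightarrow> e i = f i) \<Longrightarrow> lc m e n = lc m f n"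
  by (simp add: lc_def)

lemma lc_closed:
  assumes "P 0" "\<And>x y. P x \<Longrightarrow> P y \<Longrightarrow> P (x + y)" "\<And>a x. P x \<Longrightarrow> P (zmul a x)"
    and "\<forall>i<n. P (e i)"
  shows "P (lc m e n)"
  using assms(4) unfolding lc_def
proof (induct n)
  case 0 then show ?case using assms(1) by simp
next
  case (Suc n) then show ?case using assms(2,3) by simp
qed

definition inC :: "'z::linordered_ab_group_add \<Rightarrow> 'z \<Rightarrow> bool" where
  "inC s y = (\<exists>k::nat. zabs y \<le> zmul (int k) s)"

lemma inC_0: "inC s 0"
  unfolding inC_def by (rule exI[of _ 0]) (simp add: zabs_def)

lemma inC_add: "0 \<le> s \<Longrightarrow> inC s x \<Longrightarrow> inC s y \<Longrightarrow> inC s (x + y)"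
proof -
  assume s: "0 \<le> s" and "inC s x" "inC s y"
  then obtain k1 k2 where k: "zabs x \<le> zmul (int k1) s" "zabs y \<le> zmul (int k2) s"
    unfolding inC_def by blast
  have "zabs (x + y) \<le> zabs x + zabs y" by (rule zabs_triangle)
  also have "\<dots> \<le> zmul (int k1) s + zmul (int k2) s" using k by (rule add_mono)
  also have "\<dots> = zmul (int (k1 + k2)) s" by (simp add: zmul_add)
  finally show ?thesis unfolding inC_def by blast
qed

lemma inC_zmul: "0 \<le> s \<Longrightarrow> inC s x \<Longrightarrow> inC s (zmul a x)"
proof -
  assume s: "0 \<le> s" and "inC s x"
  then obtain k where k: "zabs x \<le> zmul (int k) s" unfolding inC_def by blast
  have "zabs (zmul a x) = zmul \<bar>a\<bar> (zabs x)" by (rule zabs_zmul)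
  also have "\<dots> \<le> zmul \<bar>a\<bar> (zmul (int k) s)" using k by (intro zmul_mono) auto
  also have "\<dots> = zmul (int (nat \<bar>a\<bar> * k)) s" by (simp add: zmul_mult[symmetric])
  finally show ?thesis unfolding inC_def by blast
qed

lemma inC_neg: "0 \<le> s \<Longrightarrow> inC s x \<Longrightarrow> inC s (- x)"
  using inC_zmul[of s x "-1"] by (simp add: zmul_neg)

lemma inC_diff: "0 \<le> s \<Longrightarrow> inC s x \<Longrightarrow> inC s y \<Longrightarrow> inC s (x - y)"
  using inC_add[of s x "-y"] inC_neg[of s y] by simp

lemma inC_lc: "0 \<le> s \<Longrightarrow> \<forall>i<n. inC s (e i) \<Longrightarrow> inC s (lc m e n)"
  by (rule lc_closed[where P="inC s"]) (auto intro: inC_0 inC_add inC_zmul)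

lemma inC_cancel: "j \<noteq> 0 \<Longrightarrow> inC s (zmul j y) \<Longrightarrow> inC s y"
proof -
  assume j: "j \<noteq> 0" and "inC s (zmul j y)"
  then obtain k where k: "zabs (zmul j y) \<le> zmul (int k) s" unfolding inC_def by blast
  have "zabs y = zmul 1 (zabs y)" by simp
  also have "\<dots> \<le> zmul \<bar>j\<bar> (zabs y)" using j by (intro zmul_mono_coeff zabs_nonneg) simp
  also have "\<dots> = zabs (zmul j y)" by (simp add: zabs_zmul)
  finally show ?thesis using k unfolding inC_def by (meson order_trans)
qed

lemma div_0: "0 \<in> divisibles"
  unfolding divisibles_def by (auto intro: exI[of _ 0])

lemma div_add: "x \<in> divisibles \<Longrightarrow> y \<in> divisibles \<Longrightarrow> x + y \<in> divisibles"
proof -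
  assume x: "x \<in> divisibles" and y: "y \<in> divisibles"
  show ?thesis unfolding divisibles_def
  proof (intro CollectI allI impI)
    fix n :: int assume "n \<ge> 1"
    then obtain u v where "zmul n u = x" "zmul n v = y" using x y unfolding divisibles_def by blast
    then have "zmul n (u + v) = x + y" by (simp add: zmul_plus)
    then show "\<exists>w. zmul n w = x + y" by blast
  qed
qed

lemma div_zmul: "x \<in> divisibles \<Longrightarrow> zmul a x \<in> divisibles"
proof -
  assume x: "x \<in> divisibles"
  show ?thesis unfolding divisibles_def
  proof (intro CollectI allI impI)
    fix n :: int assume "n \<ge> 1"
    then obtain y where "zmul n y = x" using x unfolding divisibles_def by blast
    then have "zmul n (zmul a y) = zmul a x" by (metis mult.commute zmul_mult)
    then show "\<exists>y. zmul n y = zmul a x" by blast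
  qed
qed

lemma div_neg: "x \<in> divisibles \<Longrightarrow> - x \<in> divisibles"
  using div_zmul[of x "-1"] by (simp add: zmul_neg)

lemma div_diff: "x \<in> divisibles \<Longrightarrow> y \<in> divisibles \<Longrightarrow> x - y \<in> divisibles"
  using div_add[of x "-y"] div_neg[of y] by simp

lemma div_lc: "\<forall>i<n. e i \<in> divisibles \<Longrightarrow> lc m e n \<in> divisibles"
  by (rule lc_closed[where P="\<lambda>x. x \<in> divisibles"]) (auto intro: div_0 div_add div_zmul)

lemma div_divide:
  assumes x: "x \<in> divisibles" and n: "n \<noteq> 0"
  shows "\<exists>y\<in>divisibles. zmul n y = x"
proof -
  have an: "\<bar>n\<bar> \<ge> 1" using n by simp
  then obtain y where y: "zmul \<bar>n\<bar> y = x" using x unfolding divisibles_def by blast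
  have yD: "y \<in> divisibles" unfolding divisibles_def
  proof (intro CollectI allI impI)
    fix k :: int assume k: "k \<ge> 1"
    have "1 * 1 \<le> \<bar>n\<bar> * k" by (rule mult_mono) (use an k in auto)
    then have "\<bar>n\<bar> * k \<ge> 1" by simp
    then obtain z where "zmul (\<bar>n\<bar> * k) z = x" using x unfolding divisibles_def by blast
    then have "zmul (\<bar>n\<bar>) (zmul k z) = x" by (simp only: zmul_mult)
    then have "zmul (\<bar>n\<bar>) (zmul k z) = zmul (\<bar>n\<bar>) y" using y by (simp only:)
    then have "zmul k z = y" by (rule zmul_cancel[rotated]) (use n in simp)
    then show "\<exists>z. zmul k z = y" by blast
  qed
  show ?thesis
  proof (cases "n \<ge> 0")
    case True
    then have "\<bar>n\<bar> = n" by (rule abs_of_nonneg)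
    then have "zmul n y = x" using y by (simp only:)
    then show ?thesis using yD by blast
  next
    case False
    then have na: "\<bar>n\<bar> = - n" by (intro abs_of_neg) (simp only: not_le)
    have "zmul n (- y) = - zmul n y" by (rule zmul_neg_arg)
    also have "\<dots> = zmul (- n) y" by (rule zmul_neg[symmetric])
    also have "\<dots> = x" using y na by (simp only:)
    finally show ?thesis using div_neg[OF yD] by blast
  qed
qed



fun cnt :: "tm \<Rightarrow> nat \<Rightarrow> int" where
  "cnt (V i) = (\<lambda>j. if j = i then 1 else 0)"
| "cnt (Pl s t) = (\<lambda>j. cnt s j + cnt t j)"

lemma teval_lc: "tclosed n s \<Longrightarrow> teval (+) e s = lc (cnt s) (e::nat \<Rightarrow> 'z::linordered_ab_group_add) n"
proof (induct s)
  case (V i)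
  have "lc (cnt (V i)) e n = (\<Sum>j<n. if j = i then e j else 0)"
    unfolding lc_def by (intro sum.cong) auto
  also have "\<dots> = e i" using V by (simp add: sum.delta)
  finally show ?case by simp
next
  case (Pl s t) then show ?case by (simp add: lc_add_coeff)
qed

definition Rel :: "'z::linordered_ab_group_add \<Rightarrow> nat \<Rightarrow> (nat \<Rightarrow> 'z) \<Rightarrow> (nat \<Rightarrow> 'z) \<Rightarrow> bool" where
  "Rel s n e e' = ((\<forall>i<n. e' i - e i \<in> divisibles \<and> inC s (e' i - e i)) \<and>
     (\<forall>m. inC s (lc m e n) \<longrightarrow> lc m (\<lambda>i. e' i - e i) n = 0))"

lemma sign_pert:
  fixes a b :: "'z::linordered_ab_group_add"
  assumes "zabs b < zabs a"
  shows "(a + b = 0 \<longleftrightarrow> a = 0) \<and> (a + b < 0 \<longleftrightarrow> a < 0)"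
proof (cases "0 \<le> a")
  case True
  then have za: "zabs a = a" by (rule zabs_of_nonneg)
  have "- b \<le> zabs b" by (rule zabs_ge_neg)
  then have "-b < a" using assms za by simp
  then have "-b + b < a + b" by (rule add_strict_right_mono)
  then have "0 < a + b" by simp
  moreover have "0 < a" using assms za zabs_nonneg[of b] by simp
  ultimately show ?thesis by auto
next
  case False
  then have za: "zabs a = - a" by (simp add: zabs_def)
  have "b \<le> zabs b" by (rule zabs_ge)
  then have "b < - a" using assms za by simp
  then have "a + b < a + - a" by (rule add_strict_left_mono)
  then have "a + b < 0" by simp
  then show ?thesis using False by auto
qed

lemma Rel_lc:
  assumes R: "Rel s n e e'" and s: "0 \<le> s"
  shows "(lc c e' n = 0 \<longleftrightarrow> lc c e n = 0) \<and> (lc c e' n < 0 \<longleftrightarrow> lc c e n < 0)"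
proof -
  define d where "d = (\<lambda>i. e' i - e i)"
  have e': "lc c e' n = lc c e n + lc c d n"
    using lc_add_env[of c e d n] by (simp add: d_def)
  show ?thesis
  proof (cases "inC s (lc c e n)")
    case True
    then have "lc c d n = 0" using R unfolding Rel_def d_def by blast
    then show ?thesis using e' by simp
  next
    case False
    have "inC s (lc c d n)" using R s unfolding Rel_def d_def by (intro inC_lc) auto
    then obtain k where k: "zabs (lc c d n) \<le> zmul (int k) s" unfolding inC_def by blast
    moreover have "\<not> zabs (lc c e n) \<le> zmul (int k) s" using False unfolding inC_def by blast
    ultimately have "zabs (lc c d n) < zabs (lc c e n)" by auto
    from sign_pert[OF this] show ?thesis using e' by simp
  qed
qed

lemma Rel_sym:
  assumes R: "Rel s n e e'" and s: "0 \<le> s"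
  shows "Rel s n e' e"
proof -
  have A: "\<forall>i<n. e i - e' i \<in> divisibles \<and> inC s (e i - e' i)"
  proof (intro allI impI)
    fix i assume "i < n"
    then have "e' i - e i \<in> divisibles \<and> inC s (e' i - e i)" using R unfolding Rel_def by blast
    then have "- (e' i - e i) \<in> divisibles \<and> inC s (- (e' i - e i))"
      using div_neg inC_neg[OF s] by blast
    moreover have "e i - e' i = - (e' i - e i)" by simp
    ultimately show "e i - e' i \<in> divisibles \<and> inC s (e i - e' i)" by (simp only:)
  qed
  have B: "lc m (\<lambda>i. e i - e' i) n = 0" if m: "inC s (lc m e' n)" for m
  proof -
    have dC: "inC s (lc m (\<lambda>i. e' i - e i) n)" using R s unfolding Rel_def by (intro inC_lc) auto
    have "lc m e n = lc m e' n - lc m (\<lambda>i. e' i - e i) n" by (simp add: lc_diff_env)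
    then have "inC s (lc m e n)" using inC_diff[OF s m dC] by simp
    then have "lc m (\<lambda>i. e' i - e i) n = 0" using R unfolding Rel_def by blast
    then show ?thesis by (simp add: lc_diff_env)
  qed
  show ?thesis unfolding Rel_def using A B by blast
qed

lemma Rel_I:
  assumes "\<forall>i<n. e' i - e i = d i" "\<forall>i<n. d i \<in> divisibles \<and> inC s (d i)"
    "\<And>m. inC s (lc m e n) \<Longrightarrow> lc m d n = 0"
  shows "Rel s n e e'"
proof -
  have "lc m (\<lambda>i. e' i - e i) n = lc m d n" for m using assms(1) by (intro lc_cong) auto
  then show ?thesis unfolding Rel_def using assms by auto
qed

lemma Rel_forth:
  assumes R: "Rel s n e e'" and s: "0 \<le> s"
  shows "\<exists>x'. Rel s (Suc n) (case_nat x e) (case_nat x' e')"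
proof -
  define d where "d = (\<lambda>i. e' i - e i)"
  have dD: "\<forall>i<n. d i \<in> divisibles" and dC: "\<forall>i<n. inC s (d i)"
    and Rm: "\<And>m. inC s (lc m e n) \<Longrightarrow> lc m d n = 0"
    using R unfolding Rel_def d_def by auto
  show ?thesis
  proof (cases "\<exists>m j. j \<noteq> 0 \<and> inC s (zmul j x + lc m e n)")
    case True
    then obtain m j where j: "j \<noteq> 0" and u: "inC s (zmul j x + lc m e n)" by blast
    have "- lc m d n \<in> divisibles" using dD by (intro div_neg div_lc)
    then obtain dx where dxD: "dx \<in> divisibles" and dx: "zmul j dx = - lc m d n"
      using div_divide j by blast
    have "inC s (- lc m d n)" using dC s by (intro inC_neg inC_lc)
    then have "inC s (zmul j dx)" using dx by (simp only:)
    then have dxC: "inC s dx" using j inC_cancel by blast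
    have "Rel s (Suc n) (case_nat x e) (case_nat (x + dx) e')"
    proof (rule Rel_I[where d="case_nat dx d"])
      show "\<forall>i<Suc n. case_nat (x + dx) e' i - case_nat x e i = case_nat dx d i"
        by (auto simp: d_def split: nat.split)
      show "\<forall>i<Suc n. case_nat dx d i \<in> divisibles \<and> inC s (case_nat dx d i)"
        using dD dC dxD dxC by (auto split: nat.split)
    next
      fix m' assume v: "inC s (lc m' (case_nat x e) (Suc n))"
      define a where "a = m' 0"
      define m'' where "m'' = (\<lambda>i. m' (Suc i))"
      have v': "inC s (zmul a x + lc m'' e n)" using v by (simp add: lc_shift a_def m''_def)
      have "zmul j (zmul a x + lc m'' e n) - zmul a (zmul j x + lc m e n)
            = lc (\<lambda>i. j * m'' i - a * m i) e n"
        by (simp add: lc_diff_coeff lc_smul_coeff zmul_plus zmul_mult[symmetric] mult.commute)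
      moreover have "inC s (zmul j (zmul a x + lc m'' e n) - zmul a (zmul j x + lc m e n))"
        using v' u s by (intro inC_diff inC_zmul)
      ultimately have "inC s (lc (\<lambda>i. j * m'' i - a * m i) e n)" by (simp only:)
      then have "lc (\<lambda>i. j * m'' i - a * m i) d n = 0" by (rule Rm)
      then have E: "zmul j (lc m'' d n) = zmul a (lc m d n)"
        by (simp add: lc_diff_coeff lc_smul_coeff)
      have "zmul j (zmul a dx + lc m'' d n) = zmul a (zmul j dx) + zmul a (lc m d n)"
        by (simp add: zmul_plus E zmul_mult[symmetric] mult.commute)
      also have "\<dots> = 0" by (simp add: dx zmul_neg_arg)
      finally have "zmul a dx + lc m'' d n = 0" using zmul_zero_iff[OF j] by blast
      then show "lc m' (case_nat dx d) (Suc n) = 0" by (simp add: lc_shift a_def m''_def)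
    qed
    then show ?thesis by blast
  next
    case False
    have "Rel s (Suc n) (case_nat x e) (case_nat x e')"
    proof (rule Rel_I[where d="case_nat 0 d"])
      show "\<forall>i<Suc n. case_nat x e' i - case_nat x e i = case_nat 0 d i"
        by (auto simp: d_def split: nat.split)
      show "\<forall>i<Suc n. case_nat 0 d i \<in> divisibles \<and> inC s (case_nat 0 d i)"
        using dD dC div_0 inC_0 by (auto split: nat.split)
    next
      fix m' assume v: "inC s (lc m' (case_nat x e) (Suc n))"
      then have v': "inC s (zmul (m' 0) x + lc (\<lambda>i. m' (Suc i)) e n)" by (simp add: lc_shift)
      then have "m' 0 = 0" using False by blast
      then have "inC s (lc (\<lambda>i. m' (Suc i)) e n)" using v' by simp
      then have "lc (\<lambda>i. m' (Suc i)) d n = 0" by (rule Rm)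
      then show "lc m' (case_nat 0 d) (Suc n) = 0" by (simp add: lc_shift)
    qed
    then show ?thesis by blast
  qed
qed

lemma sat_Rel:
  assumes "Rel s n e e'" "0 \<le> s" "closedn n \<phi>"
  shows "sat (+) (<) e \<phi> = sat (+) (<) e' (\<phi>::fm)"
  using assms
proof (induct \<phi> arbitrary: n e e')
  case (Eq t1 t2)
  then have c: "tclosed n t1" "tclosed n t2" by auto
  have "sat (+) (<) e (Eq t1 t2) \<longleftrightarrow> lc (\<lambda>i. cnt t1 i - cnt t2 i) e n = 0"
    using c by (simp add: teval_lc[of n _ e] lc_diff_coeff)
  moreover have "sat (+) (<) e' (Eq t1 t2) \<longleftrightarrow> lc (\<lambda>i. cnt t1 i - cnt t2 i) e' n = 0"
    using c by (simp add: teval_lc[of n _ e'] lc_diff_coeff)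
  ultimately show ?case using Rel_lc[OF Eq(1,2)] by blast
next
  case (Lt t1 t2)
  then have c: "tclosed n t1" "tclosed n t2" by auto
  have "sat (+) (<) e (Lt t1 t2) \<longleftrightarrow> lc (\<lambda>i. cnt t1 i - cnt t2 i) e n < 0"
    using c by (simp add: teval_lc[of n _ e] lc_diff_coeff)
  moreover have "sat (+) (<) e' (Lt t1 t2) \<longleftrightarrow> lc (\<lambda>i. cnt t1 i - cnt t2 i) e' n < 0"
    using c by (simp add: teval_lc[of n _ e'] lc_diff_coeff)
  ultimately show ?case using Rel_lc[OF Lt(1,2)] by blast
next
  case (Neg \<phi>) then show ?case by simp
next
  case (Conj \<phi> \<psi>) then show ?case by simp
next
  case (Ex \<phi>)
  have c: "closedn (Suc n) \<phi>" using Ex by simp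
  have R': "Rel s n e' e" using Rel_sym Ex by blast
  show ?case
  proof
    assume "sat (+) (<) e (fm.Ex \<phi>)"
    then obtain x where x: "sat (+) (<) (case_nat x e) \<phi>" by auto
    obtain x' where "Rel s (Suc n) (case_nat x e) (case_nat x' e')" using Rel_forth Ex by blast
    then have "sat (+) (<) (case_nat x' e') \<phi>" using Ex(1) c x Ex(3) by blast
    then show "sat (+) (<) e' (fm.Ex \<phi>)" by auto
  next
    assume "sat (+) (<) e' (fm.Ex \<phi>)"
    then obtain x where x: "sat (+) (<) (case_nat x e') \<phi>" by auto
    obtain x' where "Rel s (Suc n) (case_nat x e') (case_nat x' e)" using Rel_forth R' Ex(3) by blast
    then have "sat (+) (<) (case_nat x' e) \<phi>" using Ex(1) c x Ex(3) by blast
    then show "sat (+) (<) e (fm.Ex \<phi>)" by auto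
  qed
qed




lemma zabs_sum: "zabs (\<Sum>i<(n::nat). f i) \<le> (\<Sum>i<n. zabs (f i :: 'z::linordered_ab_group_add))"
proof (induct n)
  case 0 then show ?case by (simp add: zabs_def)
next
  case (Suc n)
  then show ?case using zabs_triangle[of "\<Sum>i<n. f i" "f n"] by (simp add: add_mono order_trans)
qed

lemma zmul_sum_coeff: "(\<Sum>i<(n::nat). zmul (a i) x) = zmul (\<Sum>i<n. a i) (x::'z::linordered_ab_group_add)"
  by (induct n) (simp_all add: zmul_add)

lemma lincomb_lc: "lincomb m a = lc (\<lambda>i. m ! i) (\<lambda>i. a ! i) (length a)"
  by (simp add: lincomb_def lc_def)

lemma lc_bound:
  fixes d :: "nat \<Rightarrow> 'z::linordered_ab_group_add"
  assumes "\<forall>i<n. zabs (d i) \<le> s"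
  shows "zabs (lc m d n) \<le> zmul (\<Sum>i<n. \<bar>m i\<bar>) s"
proof -
  have "zabs (lc m d n) \<le> (\<Sum>i<n. zabs (zmul (m i) (d i)))" unfolding lc_def by (rule zabs_sum)
  also have "\<dots> = (\<Sum>i<n. zmul \<bar>m i\<bar> (zabs (d i)))" by (simp add: zabs_zmul)
  also have "\<dots> \<le> (\<Sum>i<n. zmul \<bar>m i\<bar> s)" using assms by (intro sum_mono zmul_mono) auto
  also have "\<dots> = zmul (\<Sum>i<n. \<bar>m i\<bar>) s" by (rule zmul_sum_coeff)
  finally show ?thesis .
qed

lemma Sigma_mono:
  assumes "Sigma_rel c b''" "max (zabs b) zone \<le> max (zabs b'') zone"
  shows "Sigma_rel c (b::'z::linordered_ab_group_add)"
  unfolding Sigma_rel_def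
proof (intro allI impI)
  fix m :: "int list" and k :: int assume h: "length m = length c" "m \<noteq> replicate (length c) 0" "0 < k"
  have "zmul k (max (zabs b) zone) \<le> zmul k (max (zabs b'') zone)"
    using assms(2) h(3) by (intro zmul_mono) auto
  also have "\<dots> < zabs (lincomb m c)" using assms(1) h unfolding Sigma_rel_def by blast
  finally show "zmul k (max (zabs b) zone) < zabs (lincomb m c)" .
qed

lemma Sigma_shift:
  fixes c d :: "'z::linordered_ab_group_add list"
  assumes len: "length c = r" "length d = r" and s: "0 \<le> s"
    and ds: "\<forall>i<r. zabs (d ! i) \<le> s"
    and sig: "Sigma_rel c (zabs b + zabs zone + s)"
  shows "Sigma_rel (map2 (+) c d) b"
  unfolding Sigma_rel_def
proof (intro allI impI)
  define b'' where "b'' = zabs b + zabs zone + s"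
  define M where "M = max (zabs b) zone"
  define M'' where "M'' = max (zabs b'') zone"
  fix m :: "int list" and k :: int
  assume h: "length m = length (map2 (+) c d)" "m \<noteq> replicate (length (map2 (+) c d)) 0" "0 < k"
  have lm: "length (map2 (+) c d) = r" using len by simp
  define K where "K = (\<Sum>i<r. \<bar>m ! i\<bar>)"
  have K0: "0 \<le> K" unfolding K_def by (intro sum_nonneg) auto
  have b''0: "0 \<le> b''" unfolding b''_def using s zabs_nonneg[of b] zabs_nonneg[of zone]
    by (meson add_nonneg_nonneg)
  have "zabs b'' = b''" using b''0 by (rule zabs_of_nonneg)
  then have bM: "b'' \<le> M''" unfolding M''_def by simp
  have "zabs b \<le> zabs b + zabs zone" using zabs_nonneg[of zone] by simp
  moreover have "zone \<le> zabs b + zabs zone"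
    by (rule add_increasing[OF zabs_nonneg zabs_ge])
  ultimately have "M \<le> zabs b + zabs zone" unfolding M_def by simp
  then have "M + s \<le> zabs b + zabs zone + s" by (rule add_right_mono)
  then have MM: "M + s \<le> M''" using bM unfolding b''_def by (rule order_trans)
  have M0: "0 \<le> M" unfolding M_def using zabs_nonneg[of b] by (simp add: le_max_iff_disj)
  have eq: "lincomb m (map2 (+) c d) = lincomb m c + lc (\<lambda>i. m ! i) (\<lambda>i. d ! i) r"
  proof -
    have "lincomb m (map2 (+) c d) = lc (\<lambda>i. m ! i) (\<lambda>i. c ! i + d ! i) r"
      unfolding lincomb_lc lm using len by (intro lc_cong) simp
    then show ?thesis by (simp add: lc_add_env lincomb_lc len)
  qed
  have dK: "zabs (lc (\<lambda>i. m ! i) (\<lambda>i. d ! i) r) \<le> zmul K s"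
    unfolding K_def using ds by (intro lc_bound) auto
  have "zmul (k + K) M'' < zabs (lincomb m c)"
    using sig h len K0 unfolding Sigma_rel_def b''_def M''_def by auto
  moreover have "zmul k M + zmul K s \<le> zmul (k + K) M''"
  proof -
    have "M \<le> M + s" using s by simp
    then have "M \<le> M''" using MM by (rule order_trans)
    then have "zmul k M \<le> zmul k M''" using h(3) by (intro zmul_mono) auto
    moreover have "s \<le> M + s" using M0 by simp
    then have "s \<le> M''" using MM by (rule order_trans)
    then have "zmul K s \<le> zmul K M''" using K0 by (intro zmul_mono) auto
    ultimately show ?thesis by (simp add: zmul_add add_mono)
  qed
  moreover have "zabs (lincomb m c) \<le> zabs (lincomb m (map2 (+) c d)) + zabs (lc (\<lambda>i. m ! i) (\<lambda>i. d ! i) r)"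
    using zabs_triangle[of "lincomb m (map2 (+) c d)" "- lc (\<lambda>i. m ! i) (\<lambda>i. d ! i) r"] eq
    by simp
  ultimately show "zmul k (max (zabs b) zone) < zabs (lincomb m (map2 (+) c d))"
  proof -
    let ?A = "zabs (lincomb m (map2 (+) c d))" and ?B = "zabs (lc (\<lambda>i. m ! i) (\<lambda>i. d ! i) r)"
    assume a1: "zmul (k + K) M'' < zabs (lincomb m c)"
      and a2: "zmul k M + zmul K s \<le> zmul (k + K) M''"
      and a3: "zabs (lincomb m c) \<le> ?A + ?B"
    have "zmul k M + zmul K s < ?A + ?B" using a1 a2 a3 by (meson order.strict_trans1 order.strict_trans2)
    also have "\<dots> \<le> ?A + zmul K s" using dK by (rule add_left_mono)
    finally have "zmul k M < ?A" by simp
    then show ?thesis unfolding M_def .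
  qed
qed




lemma lc_cong_coeff: "(\<And>i. i < n \<Longrightarrow> m i = m' i) \<Longrightarrow> lc m e n = lc m' e n"
  by (simp add: lc_def)

theorem mainTheorem7:
  fixes T :: "'z::linordered_ab_group_add itself"
    and r k :: nat
    and G :: "'z list monoid"
    and f :: "'z list \<Rightarrow> 'z list"
  assumes "Zgroup T" and "omega_saturated T"
    and "definable_group k G"
    and "f \<in> divisibles_pow r \<rightarrow> carrier G"
    and "\<forall>x\<in>divisibles_pow r. \<forall>y\<in>divisibles_pow r. f (map2 (+) x y) = f x \<otimes>\<^bsub>G\<^esub> f y"
    and "type_definable (r + k) {x @ f x | x. x \<in> (divisibles_pow r :: 'z list set)}"
    and "\<exists>(t::'z list) p. p \<in> Xset T r \<and> realizations r p \<subseteq> (divisibles_pow r :: 'z list set) \<and>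
           inj_on f (realizations r p \<inter> {a. Sigma_t t a})"
  shows "inj_on f (divisibles_pow r)"
proof (rule inj_onI)
  have grp: "group G" using assms(3) unfolding definable_group_def by blast
  obtain t p where pX: "p \<in> Xset T r" and pD: "realizations r p \<subseteq> (divisibles_pow r :: 'z list set)"
    and inj: "inj_on f (realizations r p \<inter> {a. Sigma_t t a})" using assms(7) by blast
  fix x y :: "'z list" assume xD: "x \<in> divisibles_pow r" and yD: "y \<in> divisibles_pow r" and fxy: "f x = f y"
  have lx: "length x = r" and ly: "length y = r" using xD yD unfolding divisibles_pow_def by auto
  define d where "d = map2 (-) x y"
  have ld: "length d = r" using lx ly by (simp add: d_def)
  have dn: "\<And>i. i < r \<Longrightarrow> d ! i = x ! i - y ! i" using lx ly by (simp add: d_def)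
  have dDi: "\<And>i. i < r \<Longrightarrow> d ! i \<in> divisibles"
  proof -
    fix i assume i: "i < r"
    have "x ! i \<in> set x" "y ! i \<in> set y" using i lx ly by auto
    then have "x ! i \<in> divisibles" "y ! i \<in> divisibles" using xD yD unfolding divisibles_pow_def by auto
    then show "d ! i \<in> divisibles" using dn[OF i] div_diff by simp
  qed
  have dD: "d \<in> divisibles_pow r" unfolding divisibles_pow_def using ld dDi
    by (auto simp: in_set_conv_nth)
  have "x = map2 (+) y d" using lx ly ld dn by (intro nth_equalityI) auto
  then have "f x = f y \<otimes>\<^bsub>G\<^esub> f d" using assms(5) yD dD by simp
  then have e1: "f y \<otimes>\<^bsub>G\<^esub> f d = f y" using fxy by simp
  have fyG: "f y \<in> carrier G" and fdG: "f d \<in> carrier G" using assms(4) yD dD by auto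
  have fd: "f d = \<one>\<^bsub>G\<^esub>" using group.l_cancel_one[OF grp fyG fdG] e1 by simp
  define s where "s = (\<Sum>i<r. zabs (d ! i))"
  have s0: "0 \<le> s" unfolding s_def by (intro sum_nonneg zabs_nonneg)
  have ds: "\<forall>i<r. zabs (d ! i) \<le> s" unfolding s_def
  proof (intro allI impI)
    fix i assume i: "i < r"
    show "zabs (d ! i) \<le> (\<Sum>i<r. zabs (d ! i))"
    proof -
      have "(\<Sum>i<r. zabs (d ! i)) = zabs (d ! i) + (\<Sum>j\<in>{..<r} - {i}. zabs (d ! j))"
        using i by (intro sum.remove) auto
      moreover have "0 \<le> (\<Sum>j\<in>{..<r} - {i}. zabs (d ! j))" by (intro sum_nonneg zabs_nonneg)
      ultimately show ?thesis by simp
    qed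
  qed
  define t' where "t' = s # map (\<lambda>b. zabs b + zabs zone + s) t"
  obtain c where cR: "c \<in> realizations r p" and cS: "Sigma_t t' c"
    using pX unfolding Xset_def by blast
  have lc_: "length c = r" using cR unfolding realizations_def by auto
  have cD: "c \<in> divisibles_pow r" using cR pD by blast
  define c' where "c' = map2 (+) c d"
  have lc': "length c' = r" using lc_ ld by (simp add: c'_def)
  have cn: "\<And>i. i < r \<Longrightarrow> c' ! i = c ! i + d ! i" using lc_ ld by (simp add: c'_def)
  have sigs: "Sigma_rel c s" using cS unfolding Sigma_t_def t'_def by simp
  have Rc: "Rel s r (\<lambda>i. c ! i) (\<lambda>i. c' ! i)"
  proof (rule Rel_I[where d="\<lambda>i. d ! i"])
    show "\<forall>i<r. c' ! i - c ! i = d ! i" using cn by simp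
    show "\<forall>i<r. d ! i \<in> divisibles \<and> inC s (d ! i)"
      using dDi ds unfolding inC_def by (auto intro: exI[of _ 1])
  next
    fix m assume mC: "inC s (lc m (\<lambda>i. c ! i) r)"
    show "lc m (\<lambda>i. d ! i) r = 0"
    proof (cases "\<forall>i<r. m i = 0")
      case True then show ?thesis by (simp add: lc_def)
    next
      case False
      then obtain i0 where i0: "i0 < r" "m i0 \<noteq> 0" by blast
      define ml where "ml = map m [0..<r]"
      have lml: "length ml = length c" using lc_ by (simp add: ml_def)
      have nz: "ml \<noteq> replicate (length c) 0"
      proof
        assume "ml = replicate (length c) 0"
        then have "ml ! i0 = 0" using i0 lc_ by simp
        then show False using i0 by (simp add: ml_def)
      qed
      have lin: "lincomb ml c = lc m (\<lambda>i. c ! i) r"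
        unfolding lincomb_lc lc_ by (intro lc_cong_coeff) (simp add: ml_def)
      obtain K :: nat where K: "zabs (lc m (\<lambda>i. c ! i) r) \<le> zmul (int K) s"
        using mC unfolding inC_def by blast
      have "zmul (int K + 1) (max (zabs s) zone) < zabs (lincomb ml c)"
        using sigs lml nz unfolding Sigma_rel_def by simp
      moreover have "zmul (int K) s \<le> zmul (int K + 1) (max (zabs s) zone)"
      proof -
        have "zmul (int K) s \<le> zmul (int K + 1) s" using s0 by (intro zmul_mono_coeff) auto
        also have "\<dots> \<le> zmul (int K + 1) (max (zabs s) zone)"
          by (intro zmul_mono) (auto simp: zabs_of_nonneg[OF s0])
        finally show ?thesis .
      qed
      ultimately show ?thesis using K lin by simp
    qed
  qed
  have c'R: "c' \<in> realizations r p"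
    unfolding realizations_def
  proof (intro CollectI conjI ballI)
    show "length c' = r" by (rule lc')
    fix \<phi> assume ph: "\<phi> \<in> p"
    have cl: "closedn r \<phi>" using pX ph unfolding Xset_def complete_type_def by blast
    have "zsat c \<phi>" using cR ph unfolding realizations_def by blast
    then show "zsat c' \<phi>" unfolding zsat_def using sat_Rel[OF Rc s0 cl] by simp
  qed
  have sig: "Sigma_rel c (zabs b + zabs zone + s)" if "b \<in> set t" for b
    using cS that unfolding Sigma_t_def t'_def by simp
  have cSt: "Sigma_t t c" unfolding Sigma_t_def
  proof
    fix b assume b: "b \<in> set t"
    have "zabs b \<le> zabs b + zabs zone + s" using s0 zabs_nonneg[of zone]
    proof -
      have "0 \<le> zabs zone + s" by (rule add_nonneg_nonneg[OF zabs_nonneg s0])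
      then have "zabs b + 0 \<le> zabs b + (zabs zone + s)" by (rule add_left_mono)
      then show ?thesis by (simp add: add.assoc)
    qed
    moreover have "zone \<le> zabs b + zabs zone + s" using s0 zabs_nonneg[of b] zabs_ge[of zone]
    proof -
      have "zone \<le> zabs b + zabs zone" by (rule add_increasing[OF zabs_nonneg zabs_ge])
      then show ?thesis by (rule add_increasing2[OF s0])
    qed
    moreover have "0 \<le> zabs b + zabs zone + s" using s0 zabs_nonneg[of b] zabs_nonneg[of zone]
      by (meson add_nonneg_nonneg)
    ultimately have "max (zabs b) zone \<le> max (zabs (zabs b + zabs zone + s)) zone"
      by (simp add: zabs_of_nonneg)
    then show "Sigma_rel c b" using Sigma_mono sig[OF b] by blast
  qed
  have c'St: "Sigma_t t c'" unfolding Sigma_t_def c'_def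
    using Sigma_shift[OF lc_ ld s0 ds] sig by blast
  have "f c' = f c \<otimes>\<^bsub>G\<^esub> f d" using assms(5) cD dD by (simp add: c'_def)
  also have "\<dots> = f c" using fd monoid.r_one[OF group.is_monoid[OF grp]] assms(4) cD by auto
  finally have "c' = c" using inj cR c'R cSt c'St by (auto dest: inj_onD)
  then have "\<And>i. i < r \<Longrightarrow> c ! i + d ! i = c ! i" using cn by simp
  then have "\<And>i. i < r \<Longrightarrow> d ! i = 0" by simp
  then show "x = y" using lx ly dn by (intro nth_equalityI) auto
qed


end
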